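(* Let $V$ be a Whittaker module of type $\eta$ over $R$ with cyclic Whittaker vector $w$. If $Z_V=(p(\Omega))$ with $p\neq0$ a monic polynomial of degree $n$, then $\{F^iH^jw : 0\le i\le n-1,\ j\in\mathbb{Z}_{\ge0}\}$ is a $\mathbb{C}$-basis of $V$. If $Z_V=0$, then $\{F^iH^jw : i,j\in\mathbb{Z}_{\ge0}\}$ is a $\mathbb{C}$-basis of $V$.
   Context: Let $f\in\mathbb{C}[H]$ be a polynomial. $R=R(f)$ is the associative $\mathbb{C}$-algebra generated by $E,F,H$ with relations $EF-FE=f(H)$, $HE-EH=E$, $HF-FH=-F$. Let $u\in\mathbb{C}[H]$ satisfy $f(H)=\tfrac12(u(H+1)-u(H))$ and $\Omega=2FE+u(H+1)$; the center $Z(R)$ is the polynomial ring $\mathbb{C}[\Omega]$. Let $R(E)=\mathbb{C}[E]$ and fix an algebra homomorphism $\eta:R(E)\to\mathbb{C}$ with $\eta(E)\neq0$. A vector $v$ of an $R$-module $V$ is a Whittaker vector of type $\eta$ if $Ev=\eta(E)v$; $V$ is a Whittaker module of type $\eta$ with cyclic Whittaker vector $w$ if $w$ is a Whittaker vector and $V=Rw$. $Z_V=\mathrm{Ann}_R(V)\cap Z(R)$. *)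

theory Defs
  imports Main "HOL-Computational_Algebra.Polynomial"
begin

definition poly_op :: "(complex \<Rightarrow> 'v::ab_group_add \<Rightarrow> 'v) \<Rightarrow> ('v \<Rightarrow> 'v) \<Rightarrow> complex poly \<Rightarrow> 'v \<Rightarrow> 'v"
  where "poly_op sc T q v = (\<Sum>k\<le>degree q. sc (coeff q k) ((T ^^ k) v))"

definition R_module ::
  "(complex \<Rightarrow> 'v::ab_group_add \<Rightarrow> 'v) \<Rightarrow> complex poly \<Rightarrow> ('v \<Rightarrow> 'v) \<Rightarrow> ('v \<Rightarrow> 'v) \<Rightarrow> ('v \<Rightarrow> 'v) \<Rightarrow> bool"
  where "R_module sc f E F H \<longleftrightarrow>
     vector_space sc \<and>
     Vector_Spaces.linear sc sc E \<and> Vector_Spaces.linear sc sc F \<and> Vector_Spaces.linear sc sc H \<and>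
     (\<forall>v. E (F v) - F (E v) = poly_op sc H f v) \<and>
     (\<forall>v. H (E v) - E (H v) = E v) \<and>
     (\<forall>v. H (F v) - F (H v) = - F v)"

definition Omega_op ::
  "(complex \<Rightarrow> 'v::ab_group_add \<Rightarrow> 'v) \<Rightarrow> complex poly \<Rightarrow> ('v \<Rightarrow> 'v) \<Rightarrow> ('v \<Rightarrow> 'v) \<Rightarrow> ('v \<Rightarrow> 'v) \<Rightarrow> 'v \<Rightarrow> 'v"
  where "Omega_op sc u E F H v = sc 2 (F (E v)) + poly_op sc H (pcompose u [:1, 1:]) v"

definition gen_submodule ::
  "(complex \<Rightarrow> 'v::ab_group_add \<Rightarrow> 'v) \<Rightarrow> ('v \<Rightarrow> 'v) \<Rightarrow> ('v \<Rightarrow> 'v) \<Rightarrow> ('v \<Rightarrow> 'v) \<Rightarrow> 'v \<Rightarrow> 'v set"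
  where "gen_submodule sc E F H w =
    \<Inter>{S. module.subspace sc S \<and> w \<in> S \<and> E ` S \<subseteq> S \<and> F ` S \<subseteq> S \<and> H ` S \<subseteq> S}"

text \<open>Whittaker module of type \<eta> (with \<eta>(E) = c) and cyclic Whittaker vector w.\<close>
definition whittaker_module ::
  "(complex \<Rightarrow> 'v::ab_group_add \<Rightarrow> 'v) \<Rightarrow> complex poly \<Rightarrow> ('v \<Rightarrow> 'v) \<Rightarrow> ('v \<Rightarrow> 'v) \<Rightarrow> ('v \<Rightarrow> 'v) \<Rightarrow> complex \<Rightarrow> 'v \<Rightarrow> bool"
  where "whittaker_module sc f E F H c w \<longleftrightarrow>
     R_module sc f E F H \<and> E w = sc c w \<and> gen_submodule sc E F H w = UNIV"

text \<open>Z_V, identified (via Z(R) = C[\<Omega>] polynomial ring) with the ideal of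
polynomials q such that q(\<Omega>) annihilates V.\<close>
definition Z_V ::
  "(complex \<Rightarrow> 'v::ab_group_add \<Rightarrow> 'v) \<Rightarrow> complex poly \<Rightarrow> ('v \<Rightarrow> 'v) \<Rightarrow> ('v \<Rightarrow> 'v) \<Rightarrow> ('v \<Rightarrow> 'v) \<Rightarrow> complex poly set"
  where "Z_V sc u E F H = {q. \<forall>v. poly_op sc (Omega_op sc u E F H) q v = 0}"

definition is_basis_family :: "(complex \<Rightarrow> 'v::ab_group_add \<Rightarrow> 'v) \<Rightarrow> ('i \<Rightarrow> 'v) \<Rightarrow> 'i set \<Rightarrow> bool"
  where "is_basis_family sc b I \<longleftrightarrow>
     inj_on b I \<and> \<not> module.dependent sc (b ` I) \<and> module.span sc (b ` I) = UNIV"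

end

theory Submission
  imports Defs
begin

definition lin :: "('a \<Rightarrow> 'v::ab_group_add \<Rightarrow> 'v) \<Rightarrow> ('v \<Rightarrow> 'v) \<Rightarrow> bool"
  where "lin sc T \<longleftrightarrow> (\<forall>x y. T (x + y) = T x + T y) \<and> (\<forall>a x. T (sc a x) = sc a (T x))"

locale cvs = vector_space sc for sc :: "complex \<Rightarrow> 'v::ab_group_add \<Rightarrow> 'v"
begin

lemma lin_add: "lin sc T \<Longrightarrow> T (x + y) = T x + T y"
  by (simp add: lin_def)
lemma lin_scale: "lin sc T \<Longrightarrow> T (sc a x) = sc a (T x)"
  by (simp add: lin_def)
lemma lin_zero: "lin sc T \<Longrightarrow> T 0 = 0"
  using lin_scale[of T 0 0] by simp
lemma lin_neg: "lin sc T \<Longrightarrow> T (- x) = - T x"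
  using lin_scale[of T "-1" x] by simp
lemma lin_diff: "lin sc T \<Longrightarrow> T (x - y) = T x - T y"
  using lin_add[of T x "-y"] lin_neg[of T y] by simp
lemma lin_sum: "lin sc T \<Longrightarrow> T (sum g A) = (\<Sum>a\<in>A. T (g a))"
  by (induct A rule: infinite_finite_induct) (simp_all add: lin_zero lin_add)

lemma lin_id: "lin sc (\<lambda>x. x)" by (simp add: lin_def)
lemma lin_comp: "lin sc S \<Longrightarrow> lin sc T \<Longrightarrow> lin sc (\<lambda>x. S (T x))"
  by (simp add: lin_def)
lemma lin_plus: "lin sc S \<Longrightarrow> lin sc T \<Longrightarrow> lin sc (\<lambda>x. S x + T x)"
  by (simp add: lin_def algebra_simps)
lemma lin_scaleop: "lin sc (\<lambda>x. sc a x)"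
  by (simp add: lin_def algebra_simps)
lemma lin_funpow: "lin sc T \<Longrightarrow> lin sc (T ^^ k)"
  by (induct k) (simp_all add: lin_def)

lemma funpow_comm: "(\<And>v. S (T v) = T (S v)) \<Longrightarrow> S ((T ^^ k) v) = (T ^^ k) (S v)"
  by (induct k) simp_all

lemma poly_op_alt:
  assumes "degree q < N"
  shows "poly_op sc T q v = (\<Sum>k<N. sc (coeff q k) ((T ^^ k) v))"
proof -
  have "(\<Sum>k<N. sc (coeff q k) ((T ^^ k) v)) = (\<Sum>k\<in>{..degree q}. sc (coeff q k) ((T ^^ k) v))"
    by (rule sum.mono_neutral_right) (use assms in \<open>auto simp: coeff_eq_0\<close>)
  then show ?thesis by (simp add: poly_op_def)
qed

lemma poly_op_0[simp]: "poly_op sc T 0 v = 0"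
  by (simp add: poly_op_def)

lemma poly_op_const[simp]: "poly_op sc T [:a:] v = sc a v"
  by (simp add: poly_op_def)

lemma poly_op_add: "poly_op sc T (p + q) v = poly_op sc T p v + poly_op sc T q v"
proof -
  define N where "N = Suc (degree p + degree q)"
  have "degree p < N" "degree q < N" "degree (p + q) < N"
    using degree_add_le_max[of p q] by (auto simp: N_def)
  then show ?thesis
    by (simp add: poly_op_alt[where N=N] scale_left_distrib sum.distrib)
qed

lemma poly_op_smult: "poly_op sc T (smult a p) v = sc a (poly_op sc T p v)"
proof -
  define N where "N = Suc (degree p)"
  have "degree p < N" "degree (smult a p) < N"
    using degree_smult_le[of a p] by (auto simp: N_def)
  then show ?thesis
    by (simp add: poly_op_alt[where N=N] scale_sum_right)
qed

lemma poly_op_minus: "poly_op sc T (- p) v = - poly_op sc T p v"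
  using poly_op_smult[of T "-1" p v] by simp

lemma poly_op_diff: "poly_op sc T (p - q) v = poly_op sc T p v - poly_op sc T q v"
  using poly_op_add[of T p "-q" v] poly_op_minus[of T q v] by simp

lemma poly_op_sum: "poly_op sc T (\<Sum>i\<in>A. p i) v = (\<Sum>i\<in>A. poly_op sc T (p i) v)"
  by (induct A rule: infinite_finite_induct) (simp_all add: poly_op_add)

lemma poly_op_pCons:
  assumes T: "lin sc T"
  shows "poly_op sc T (pCons a p) v = sc a v + T (poly_op sc T p v)"
proof -
  define N where "N = Suc (degree p)"
  have d1: "degree p < N" by (simp add: N_def)
  have d2: "degree (pCons a p) < Suc N" using degree_pCons_le[of a p] by (simp add: N_def)
  have "poly_op sc T (pCons a p) v = (\<Sum>k<Suc N. sc (coeff (pCons a p) k) ((T ^^ k) v))"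
    by (rule poly_op_alt[OF d2])
  also have "\<dots> = sc a v + (\<Sum>k<N. sc (coeff p k) ((T ^^ Suc k) v))"
    unfolding sum.lessThan_Suc_shift by simp
  also have "(\<Sum>k<N. sc (coeff p k) ((T ^^ Suc k) v)) = T (poly_op sc T p v)"
    by (simp add: poly_op_alt[OF d1] lin_sum[OF T] lin_scale[OF T])
  finally show ?thesis .
qed

lemma poly_op_X: "lin sc T \<Longrightarrow> poly_op sc T [:0, 1:] v = T v"
  by (simp add: poly_op_pCons)

lemma poly_op_monom: "poly_op sc T (monom a k) v = sc a ((T ^^ k) v)"
proof -
  have "degree (monom a k) < Suc k" using degree_monom_le[of a k] by simp
  then have "poly_op sc T (monom a k) v = (\<Sum>j<Suc k. sc (coeff (monom a k) j) ((T ^^ j) v))"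
    by (rule poly_op_alt)
  also have "\<dots> = sc a ((T ^^ k) v)"
    by (simp add: sum.delta)
  finally show ?thesis .
qed

lemma lin_poly_op: assumes T: "lin sc T" shows "lin sc (poly_op sc T p)"
proof -
  define N where "N = Suc (degree p)"
  have d: "degree p < N" by (simp add: N_def)
  have LT: "lin sc (T ^^ k)" for k by (rule lin_funpow[OF T])
  show ?thesis
    unfolding lin_def poly_op_alt[OF d]
    by (simp add: lin_add[OF LT] lin_scale[OF LT] scale_right_distrib sum.distrib scale_sum_right mult.commute)
qed

lemma poly_op_mult:
  assumes T: "lin sc T"
  shows "poly_op sc T (p * q) v = poly_op sc T p (poly_op sc T q v)"
proof (induct p)
  case 0
  then show ?case by simp
next
  case (pCons a p)
  have "poly_op sc T (pCons a p * q) v = sc a (poly_op sc T q v) + T (poly_op sc T (p * q) v)"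
    by (simp add: poly_op_add poly_op_smult poly_op_pCons[OF T])
  also have "\<dots> = poly_op sc T (pCons a p) (poly_op sc T q v)"
    by (simp add: pCons poly_op_pCons[OF T])
  finally show ?case .
qed

lemma poly_op_twist:
  assumes S: "lin sc S" and T: "lin sc T"
    and rel: "\<And>v. S (T v) = T (S v) + sc a (S v)"
  shows "S (poly_op sc T g v) = poly_op sc T (pcompose g [:a, 1:]) (S v)"
proof (induct g arbitrary: v)
  case 0
  then show ?case by (simp add: lin_zero[OF S])
next
  case (pCons b g)
  have "S (poly_op sc T (pCons b g) v) = sc b (S v) + S (T (poly_op sc T g v))"
    by (simp add: poly_op_pCons[OF T] lin_add[OF S] lin_scale[OF S])
  also have "\<dots> = sc b (S v) + T (poly_op sc T (pcompose g [:a, 1:]) (S v))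
       + sc a (poly_op sc T (pcompose g [:a, 1:]) (S v))"
    by (simp add: rel pCons add.assoc)
  also have "\<dots> = poly_op sc T (pcompose (pCons b g) [:a, 1:]) (S v)"
    by (simp add: pcompose_pCons poly_op_add poly_op_mult[OF T] poly_op_pCons[OF T] poly_op_smult algebra_simps)
  finally show ?case .
qed

lemma poly_op_comm:
  assumes S: "lin sc S" and T: "lin sc T"
    and rel: "\<And>v. S (T v) = T (S v)"
  shows "S (poly_op sc T g v) = poly_op sc T g (S v)"
  using poly_op_twist[OF S T, of 0 g v] rel by simp

lemma indep_family:
  assumes H: "\<And>J a. finite J \<Longrightarrow> J \<subseteq> I \<Longrightarrow> (\<Sum>x\<in>J. sc (a x) (b x)) = 0 \<Longrightarrow> \<forall>x\<in>J. a x = 0"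
  shows "inj_on b I \<and> \<not> dependent (b ` I)"
proof
  show inj: "inj_on b I"
  proof (rule inj_onI, rule ccontr)
    fix x y assume xy: "x \<in> I" "y \<in> I" "b x = b y" "x \<noteq> y"
    let ?a = "\<lambda>z. if z = x then 1 else (-1::complex)"
    have "(\<Sum>z\<in>{x,y}. sc (?a z) (b z)) = 0" using xy by simp
    from H[OF _ _ this] xy show False by auto
  qed
  show "\<not> dependent (b ` I)"
  proof
    assume "dependent (b ` I)"
    then obtain T U where T: "finite T" "T \<subseteq> b ` I" "(\<Sum>v\<in>T. sc (U v) v) = 0" "\<exists>v\<in>T. U v \<noteq> 0"
      unfolding dependent_explicit by blast
    from finite_subset_image[OF T(1) T(2)] obtain C where C: "C \<subseteq> I" "finite C" "T = b ` C" by blast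
    have ic: "inj_on b C" using inj C(1) by (rule inj_on_subset)
    have "(\<Sum>x\<in>C. sc (U (b x)) (b x)) = 0"
      using T(3) unfolding C(3) sum.reindex[OF ic] by simp
    from H[OF C(2) C(1) this] T(4) C(3) show False by auto
  qed
qed

end

lemma shift_poly_nonconst:
  fixes g :: "complex poly"
  assumes "0 < degree g"
  shows "pcompose g [:-1, 1:] - g \<noteq> 0"
proof
  assume eq: "pcompose g [:-1, 1:] - g = 0"
  have step: "poly g (x - 1) = poly g x" for x
  proof -
    have "poly (pcompose g [:-1, 1:]) x = poly g x" using eq by simp
    then show ?thesis by (simp add: poly_pcompose)
  qed
  have allk: "poly g (- of_nat k) = poly g 0" for k
  proof (induct k)
    case 0 then show ?case by simp
  next
    case (Suc k)
    have "(- of_nat (Suc k) :: complex) = - of_nat k - 1" by simp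
    then have "poly g (- of_nat (Suc k)) = poly g (- of_nat k - 1)" by metis
    also have "\<dots> = poly g (- of_nat k)" by (rule step)
    finally show ?case using Suc by simp
  qed
  define h where "h = g - [:poly g 0:]"
  have "range (\<lambda>k::nat. - (of_nat k :: complex)) \<subseteq> {x. poly h x = 0}"
    using allk by (auto simp: h_def)
  moreover have "infinite (range (\<lambda>k::nat. - (of_nat k :: complex)))"
    by (rule range_inj_infinite) (auto simp: inj_def)
  ultimately have "infinite {x. poly h x = 0}" using infinite_super by blast
  then have "h = 0" using poly_roots_finite by blast
  then have "g = [:poly g 0:]" by (simp add: h_def)
  then have "degree g = 0" by (metis degree_pCons_0)
  with assms show False by simp
qed

lemma shift_poly_degree:
  fixes g :: "complex poly"
  assumes "degree g \<le> Suc d"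
  shows "degree (pcompose g [:-1, 1:] - g) \<le> d"
proof (rule degree_le, intro allI impI)
  fix i assume i: "d < i"
  have dg: "degree (pcompose g [:-1, 1:]) = degree g" by (simp add: degree_pcompose)
  show "coeff (pcompose g [:-1, 1:] - g) i = 0"
  proof (cases "i = degree g")
    case True
    then have "0 < degree g" using i by simp
    have "lead_coeff (pcompose g [:-1, 1:]) = lead_coeff g"
      by (subst lead_coeff_comp) simp_all
    then show ?thesis using True dg by simp
  next
    case False
    then have "degree g < i" using i assms by simp
    then show ?thesis using dg by (simp add: coeff_eq_0)
  qed
qed

locale WM = cvs sc for sc :: "complex \<Rightarrow> 'v::ab_group_add \<Rightarrow> 'v" +
  fixes f u :: "complex poly" and E F H :: "'v \<Rightarrow> 'v" and c :: complex and w :: 'v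
  assumes hu: "f = smult (1/2) (pcompose u [:1, 1:] - u)"
    and hc: "c \<noteq> 0"
    and linE: "lin sc E" and linF: "lin sc F" and linH: "lin sc H"
    and rel1: "\<And>v. E (F v) - F (E v) = poly_op sc H f v"
    and rel2: "\<And>v. H (E v) - E (H v) = E v"
    and rel3: "\<And>v. H (F v) - F (H v) = - F v"
    and Ew: "E w = sc c w"
    and gen: "gen_submodule sc E F H w = UNIV"
begin

abbreviation PH where "PH g \<equiv> poly_op sc H g"
abbreviation Om where "Om \<equiv> Omega_op sc u E F H"
abbreviation PO where "PO q \<equiv> poly_op sc Om q"
abbreviation u1 where "u1 \<equiv> pcompose u [:1, 1:]"

lemma FH: "F (H v) = H (F v) + sc 1 (F v)"
  using rel3[of v] by (simp add: algebra_simps)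

lemma EH: "E (H v) = H (E v) + sc (-1) (E v)"
  using rel2[of v] by (simp add: algebra_simps)

lemma EF: "E (F v) = F (E v) + PH f v"
  using rel1[of v] by (metis diff_add_cancel add.commute)

lemma lin_PH: "lin sc (PH g)" by (rule lin_poly_op[OF linH])

lemma F_PH: "F (PH g v) = PH (pcompose g [:1, 1:]) (F v)"
  by (rule poly_op_twist[OF linF linH FH])

lemma E_PH: "E (PH g v) = PH (pcompose g [:-1, 1:]) (E v)"
  by (rule poly_op_twist[OF linE linH EH])

lemma H_PH: "H (PH g v) = PH g (H v)"
  by (rule poly_op_comm[OF linH linH]) simp

lemma Om_eq: "Om v = sc 2 (F (E v)) + PH u1 v"
  by (simp add: Omega_op_def)

lemma lin_Om: "lin sc Om"
proof -
  have "lin sc (\<lambda>v. sc 2 (F (E v)) + PH u1 v)"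
    by (intro lin_plus lin_comp[OF lin_scaleop] lin_comp[OF linF linE] lin_PH)
  then show ?thesis by (simp add: Omega_op_def[abs_def])
qed

lemma u1_eq: "smult 2 f + u = u1"
  by (simp add: hu smult_diff_right)

lemma Om_H: "Om (H v) = H (Om v)"
proof -
  have "F (E (H v)) = H (F (E v))"
    by (simp add: EH FH lin_add[OF linF] lin_diff[OF linF] lin_scale[OF linF])
  then show ?thesis
    by (simp add: Om_eq H_PH lin_add[OF linH] lin_scale[OF linH])
qed

lemma Om_F: "Om (F v) = F (Om v)"
proof -
  have "Om (F v) = sc 2 (F (F (E v))) + sc 2 (F (PH f v)) + F (PH u v)"
    by (simp add: Om_eq EF F_PH scale_right_distrib lin_add[OF linF])
  also have "\<dots> = F (sc 2 (F (E v)) + PH (smult 2 f + u) v)"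
    by (simp add: lin_add[OF linF] lin_scale[OF linF] poly_op_add poly_op_smult add.assoc)
  also have "\<dots> = F (Om v)" by (simp add: u1_eq Om_eq)
  finally show ?thesis .
qed

lemma Om_E: "Om (E v) = E (Om v)"
proof -
  have a: "pcompose u1 [:-1, 1:] = u"
    by (simp add: pcompose_assoc[symmetric] pcompose_pCons)
  have "E (Om v) = sc 2 (F (E (E v))) + sc 2 (PH f (E v)) + PH u (E v)"
    by (simp add: Om_eq EF E_PH a lin_add[OF linE] lin_scale[OF linE] scale_right_distrib)
  also have "\<dots> = sc 2 (F (E (E v))) + PH (smult 2 f + u) (E v)"
    by (simp add: poly_op_add poly_op_smult add.assoc)
  also have "\<dots> = Om (E v)" by (simp add: u1_eq Om_eq)
  finally show ?thesis by simp
qed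

lemma PH_Om: "PH g (Om v) = Om (PH g v)"
  by (rule poly_op_comm[OF lin_Om linH Om_H, symmetric])

lemma PH_Omk: "PH g ((Om ^^ k) v) = (Om ^^ k) (PH g v)"
  by (rule funpow_comm[where S="PH g" and T=Om]) (rule PH_Om)

lemma Fi_Om: "(F ^^ i) (Om v) = Om ((F ^^ i) v)"
  by (rule funpow_comm[where S=Om and T=F, symmetric]) (rule Om_F)

lemma E_Omk: "E ((Om ^^ k) w) = sc c ((Om ^^ k) w)"
proof -
  have "E ((Om ^^ k) w) = (Om ^^ k) (E w)" by (rule funpow_comm[where S=E and T=Om]) (rule Om_E[symmetric])
  then show ?thesis by (simp add: Ew lin_scale[OF lin_funpow[OF lin_Om]])
qed

lemma Fw: "F w = sc (inverse (2 * c)) (Om w - PH u1 w)"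
proof -
  have "Om w = sc (2 * c) (F w) + PH u1 w"
    by (simp add: Om_eq Ew lin_scale[OF linF])
  then have "Om w - PH u1 w = sc (2 * c) (F w)" by simp
  then show ?thesis using hc by simp
qed

lemma lin_PO: "lin sc (PO q)" by (rule lin_poly_op[OF lin_Om])

lemma PO_kill:
  assumes "PO q w = 0"
  shows "PO q v = 0"
proof -
  define S where "S = {v. PO q v = 0}"
  have L: "lin sc (PO q)" by (rule lin_PO)
  have sub: "subspace S"
    by (rule subspaceI) (auto simp: S_def lin_zero[OF L] lin_add[OF L] lin_scale[OF L])
  have cE: "E ` S \<subseteq> S"
    using poly_op_comm[OF linE lin_Om Om_E[symmetric], symmetric] lin_zero[OF linE] by (auto simp: S_def)
  have cF: "F ` S \<subseteq> S"
    using poly_op_comm[OF linF lin_Om Om_F[symmetric], symmetric] lin_zero[OF linF] by (auto simp: S_def)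
  have cH: "H ` S \<subseteq> S"
    using poly_op_comm[OF linH lin_Om Om_H[symmetric], symmetric] lin_zero[OF linH] by (auto simp: S_def)
  have "w \<in> S" using assms by (simp add: S_def)
  then have "gen_submodule sc E F H w \<subseteq> S"
    unfolding gen_submodule_def using sub cE cF cH by blast
  then show ?thesis using gen by (auto simp: S_def)
qed

end

context WM
begin

definition Y :: "nat \<Rightarrow> 'v set" where
  "Y m = {y. \<exists>G. y = (\<Sum>k<m. PH (G k) ((Om ^^ k) w))}"

lemma PH_one: "PH 1 v = v" by (simp add: poly_op_def)

lemma Y_subspace: "subspace (Y m)"
proof (rule subspaceI)
  show "0 \<in> Y m" unfolding Y_def by (rule CollectI, rule exI[of _ "\<lambda>_. 0"]) simp
next
  fix x y assume "x \<in> Y m" "y \<in> Y m"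
  then obtain G1 G2 where "x = (\<Sum>k<m. PH (G1 k) ((Om ^^ k) w))" "y = (\<Sum>k<m. PH (G2 k) ((Om ^^ k) w))"
    unfolding Y_def by blast
  then have "x + y = (\<Sum>k<m. PH (G1 k + G2 k) ((Om ^^ k) w))"
    by (simp add: poly_op_add sum.distrib)
  then show "x + y \<in> Y m" unfolding Y_def by (auto intro!: exI[of _ "\<lambda>k. G1 k + G2 k"])
next
  fix a x assume "x \<in> Y m"
  then obtain G where "x = (\<Sum>k<m. PH (G k) ((Om ^^ k) w))" unfolding Y_def by blast
  then have "sc a x = (\<Sum>k<m. PH (smult a (G k)) ((Om ^^ k) w))"
    by (simp add: poly_op_smult scale_sum_right)
  then show "sc a x \<in> Y m" unfolding Y_def by (auto intro!: exI[of _ "\<lambda>k. smult a (G k)"])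
qed

lemma Y_single: assumes "k < m" shows "PH h ((Om ^^ k) w) \<in> Y m"
proof -
  let ?G = "\<lambda>j. if j = k then h else 0"
  have "(\<Sum>j<m. PH (?G j) ((Om ^^ j) w)) = (\<Sum>j<m. if j = k then PH h ((Om ^^ j) w) else 0)"
    by (rule sum.cong) auto
  also have "\<dots> = PH h ((Om ^^ k) w)" using assms by (simp add: sum.delta)
  finally show ?thesis unfolding Y_def by (auto intro!: exI[of _ ?G])
qed

lemma Y_mono: assumes "m \<le> m'" shows "Y m \<subseteq> Y m'"
proof
  fix y assume "y \<in> Y m"
  then obtain G where y: "y = (\<Sum>k<m. PH (G k) ((Om ^^ k) w))" unfolding Y_def by blast
  show "y \<in> Y m'" unfolding y
    by (rule subspace_sum[OF Y_subspace]) (use assms Y_single in auto)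
qed

lemma Y_closed:
  assumes T: "lin sc T" and h: "\<And>h k. k < m \<Longrightarrow> T (PH h ((Om ^^ k) w)) \<in> Y m'"
    and y: "y \<in> Y m"
  shows "T y \<in> Y m'"
proof -
  obtain G where y: "y = (\<Sum>k<m. PH (G k) ((Om ^^ k) w))" using y unfolding Y_def by blast
  show ?thesis unfolding y lin_sum[OF T]
    by (rule subspace_sum[OF Y_subspace]) (use h in auto)
qed

lemma Y_Om: assumes "y \<in> Y m" shows "Om y \<in> Y (Suc m)"
proof (rule Y_closed[OF lin_Om _ assms])
  fix h k assume "k < m"
  have "Om (PH h ((Om ^^ k) w)) = PH h ((Om ^^ Suc k) w)" by (simp add: PH_Om)
  then show "Om (PH h ((Om ^^ k) w)) \<in> Y (Suc m)" using Y_single[of "Suc k" "Suc m" h] \<open>k < m\<close> by simp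
qed

lemma F_Omk: "F ((Om ^^ k) v) = (Om ^^ k) (F v)"
  by (rule funpow_comm[where S=F and T=Om]) (rule Om_F[symmetric])

lemma F_term: "F (PH h ((Om ^^ k) w)) =
   sc (inverse (2 * c)) (PH (pcompose h [:1, 1:]) ((Om ^^ Suc k) w) - PH (pcompose h [:1, 1:] * u1) ((Om ^^ k) w))"
proof -
  have LO: "lin sc (Om ^^ k)" by (rule lin_funpow[OF lin_Om])
  have "F (PH h ((Om ^^ k) w)) = PH (pcompose h [:1, 1:]) ((Om ^^ k) (F w))"
    by (simp add: F_PH F_Omk)
  also have "\<dots> = sc (inverse (2 * c)) (PH (pcompose h [:1, 1:]) ((Om ^^ k) (Om w)) - PH (pcompose h [:1, 1:]) ((Om ^^ k) (PH u1 w)))"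
    by (simp add: Fw lin_scale[OF LO] lin_diff[OF LO] lin_scale[OF lin_PH] lin_diff[OF lin_PH])
  also have "(Om ^^ k) (Om w) = (Om ^^ Suc k) w" by (simp add: funpow_swap1)
  also have "PH (pcompose h [:1, 1:]) ((Om ^^ k) (PH u1 w)) = PH (pcompose h [:1, 1:] * u1) ((Om ^^ k) w)"
    by (simp add: poly_op_mult[OF linH] PH_Omk)
  finally show ?thesis .
qed

lemma Y_all: "\<exists>m. v \<in> Y m"
proof -
  define S where "S = {v. \<exists>m. v \<in> Y m}"
  have sub: "subspace S"
  proof (rule subspaceI)
    show "0 \<in> S" using subspace_0[OF Y_subspace] by (auto simp: S_def)
  next
    fix x y assume "x \<in> S" "y \<in> S"
    then obtain a b where "x \<in> Y a" "y \<in> Y b" by (auto simp: S_def)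
    then have "x \<in> Y (max a b)" "y \<in> Y (max a b)" using Y_mono[of a "max a b"] Y_mono[of b "max a b"] by auto
    then show "x + y \<in> S" using subspace_add[OF Y_subspace] by (auto simp: S_def)
  next
    fix a x assume "x \<in> S" then show "sc a x \<in> S" using subspace_scale[OF Y_subspace] by (auto simp: S_def)
  qed
  have "w \<in> Y 1" using Y_single[of 0 1 1] by (simp add: PH_one)
  then have wS: "w \<in> S" by (auto simp: S_def)
  have cE: "E ` S \<subseteq> S"
  proof (clarsimp simp: S_def)
    fix y m assume y: "y \<in> Y m"
    have "E y \<in> Y m"
    proof (rule Y_closed[OF linE _ y])
      fix h k assume k: "k < m"
      have "E (PH h ((Om ^^ k) w)) = sc c (PH (pcompose h [:-1, 1:]) ((Om ^^ k) w))"
        by (simp add: E_PH E_Omk lin_scale[OF lin_PH])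
      then show "E (PH h ((Om ^^ k) w)) \<in> Y m" using Y_single[OF k] subspace_scale[OF Y_subspace] by simp
    qed
    then show "\<exists>m. E y \<in> Y m" by blast
  qed
  have cH: "H ` S \<subseteq> S"
  proof (clarsimp simp: S_def)
    fix y m assume y: "y \<in> Y m"
    have "H y \<in> Y m"
    proof (rule Y_closed[OF linH _ y])
      fix h k assume k: "k < m"
      have "H (PH h ((Om ^^ k) w)) = PH ([:0, 1:] * h) ((Om ^^ k) w)"
        by (simp add: poly_op_pCons[OF linH])
      then show "H (PH h ((Om ^^ k) w)) \<in> Y m" using Y_single[OF k] by simp
    qed
    then show "\<exists>m. H y \<in> Y m" by blast
  qed
  have cF: "F ` S \<subseteq> S"
  proof (clarsimp simp: S_def)
    fix y m assume y: "y \<in> Y m"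
    have "F y \<in> Y (Suc m)"
    proof (rule Y_closed[OF linF _ y])
      fix h k assume k: "k < m"
      show "F (PH h ((Om ^^ k) w)) \<in> Y (Suc m)" unfolding F_term
        by (intro subspace_scale[OF Y_subspace] subspace_diff[OF Y_subspace] Y_single) (use k in auto)
    qed
    then show "\<exists>m. F y \<in> Y m" by blast
  qed
  have "gen_submodule sc E F H w \<subseteq> S"
    unfolding gen_submodule_def using sub wS cE cF cH by blast
  then show ?thesis using gen by (auto simp: S_def)
qed

lemma lemmaC:
  "(F ^^ i) (PH g w) - sc (inverse ((2 * c) ^ i)) (PH (pcompose g [:of_nat i, 1:]) ((Om ^^ i) w)) \<in> Y i"
proof (induct i arbitrary: g)
  case 0
  have "Y 0 = {0}" by (auto simp: Y_def)
  then show ?case by simp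
next
  case (Suc i)
  define g1 where "g1 = pcompose g [:1, 1:]"
  have LF: "lin sc (F ^^ i)" by (rule lin_funpow[OF linF])
  define y1 where "y1 = (F ^^ i) (PH g1 w) - sc (inverse ((2 * c) ^ i)) (PH (pcompose g1 [:of_nat i, 1:]) ((Om ^^ i) w))"
  define y2 where "y2 = (F ^^ i) (PH (g1 * u1) w)"
  have y1: "y1 \<in> Y i" using Suc[of g1] by (simp add: y1_def)
  have y2: "y2 \<in> Y (Suc i)"
  proof -
    have "y2 - sc (inverse ((2 * c) ^ i)) (PH (pcompose (g1 * u1) [:of_nat i, 1:]) ((Om ^^ i) w)) \<in> Y (Suc i)"
      using Suc[of "g1 * u1"] Y_mono[of i "Suc i"] by (auto simp: y2_def)
    moreover have "sc (inverse ((2 * c) ^ i)) (PH (pcompose (g1 * u1) [:of_nat i, 1:]) ((Om ^^ i) w)) \<in> Y (Suc i)"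
      by (intro subspace_scale[OF Y_subspace] Y_single) simp
    ultimately show ?thesis using subspace_add[OF Y_subspace] by fastforce
  qed
  have gg: "pcompose g1 [:of_nat i, 1:] = pcompose g [:of_nat (Suc i), 1:]"
    by (simp add: g1_def pcompose_assoc[symmetric] pcompose_pCons add.commute)
  have "(F ^^ Suc i) (PH g w) = (F ^^ i) (PH g1 (F w))"
    by (simp only: funpow_Suc_right comp_def g1_def F_PH)
  also have "\<dots> = sc (inverse (2 * c)) (Om ((F ^^ i) (PH g1 w)) - y2)"
    by (simp add: Fw y2_def lin_scale[OF lin_PH] lin_diff[OF lin_PH] lin_scale[OF LF] lin_diff[OF LF]
        poly_op_mult[OF linH] PH_Om Fi_Om)
  also have "(F ^^ i) (PH g1 w) = y1 + sc (inverse ((2 * c) ^ i)) (PH (pcompose g [:of_nat (Suc i), 1:]) ((Om ^^ i) w))"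
    by (simp add: y1_def gg)
  also have "Om \<dots> = Om y1 + sc (inverse ((2 * c) ^ i)) (PH (pcompose g [:of_nat (Suc i), 1:]) ((Om ^^ Suc i) w))"
    by (simp add: lin_add[OF lin_Om] lin_scale[OF lin_Om] PH_Om)
  finally have eq: "(F ^^ Suc i) (PH g w) - sc (inverse ((2 * c) ^ Suc i)) (PH (pcompose g [:of_nat (Suc i), 1:]) ((Om ^^ Suc i) w))
      = sc (inverse (2 * c)) (Om y1 - y2)"
    by (simp add: algebra_simps)
  show ?case unfolding eq
    by (intro subspace_scale[OF Y_subspace] subspace_diff[OF Y_subspace] Y_Om y1 y2)
qed

end

lemma shift_inv: "pcompose (pcompose h [:- a, 1:]) [:a, 1:] = (h :: complex poly)"
  by (simp add: pcompose_assoc[symmetric] pcompose_pCons)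

context WM
begin

definition fam :: "nat \<times> nat \<Rightarrow> 'v" where "fam = (\<lambda>(i, j). (F ^^ i) ((H ^^ j) w))"

lemma Fi_PH_span:
  assumes "i < m"
  shows "(F ^^ i) (PH g w) \<in> span (fam ` ({..<m} \<times> UNIV))"
proof -
  have LF: "lin sc (F ^^ i)" by (rule lin_funpow[OF linF])
  have "(F ^^ i) (PH g w) = (\<Sum>k\<le>degree g. sc (coeff g k) (fam (i, k)))"
    by (simp add: poly_op_def lin_sum[OF LF] lin_scale[OF LF] fam_def)
  also have "\<dots> \<in> span (fam ` ({..<m} \<times> UNIV))"
    by (intro span_sum span_scale span_base) (use assms in auto)
  finally show ?thesis .
qed

lemma Fi_in_Y: "(F ^^ i) (PH g w) \<in> Y (Suc i)"
proof -
  let ?t = "sc (inverse ((2 * c) ^ i)) (PH (pcompose g [:of_nat i, 1:]) ((Om ^^ i) w))"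
  have "(F ^^ i) (PH g w) - ?t \<in> Y (Suc i)" using lemmaC[of i g] Y_mono[of i "Suc i"] by auto
  moreover have "?t \<in> Y (Suc i)" by (intro subspace_scale[OF Y_subspace] Y_single) simp
  ultimately have "(F ^^ i) (PH g w) - ?t + ?t \<in> Y (Suc i)" by (rule subspace_add[OF Y_subspace])
  then show ?thesis by simp
qed

lemma Y_sub_XS: "Y m \<subseteq> span (fam ` ({..<m} \<times> UNIV))"
proof (induct m)
  case 0
  have "Y 0 = {0}" by (auto simp: Y_def)
  then show ?case by (simp add: span_zero)
next
  case (Suc m)
  show ?case
  proof
    fix y assume "y \<in> Y (Suc m)"
    then obtain G where y: "y = (\<Sum>k<Suc m. PH (G k) ((Om ^^ k) w))" unfolding Y_def by blast
    let ?X = "span (fam ` ({..<Suc m} \<times> UNIV))"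
    have mono: "span (fam ` ({..<m} \<times> UNIV)) \<subseteq> ?X" by (rule span_mono) auto
    have y1: "(\<Sum>k<m. PH (G k) ((Om ^^ k) w)) \<in> ?X"
      using Suc mono unfolding Y_def by blast
    define g where "g = pcompose (G m) [:- of_nat m, 1:]"
    have gg: "pcompose g [:of_nat m, 1:] = G m" by (simp add: g_def shift_inv)
    define t where "t = (F ^^ m) (PH g w) - sc (inverse ((2 * c) ^ m)) (PH (G m) ((Om ^^ m) w))"
    have t: "t \<in> ?X" using lemmaC[of m g] Suc mono unfolding t_def gg by blast
    have f: "(F ^^ m) (PH g w) \<in> ?X" by (rule Fi_PH_span) simp
    have nz: "(2 * c) ^ m \<noteq> 0" using hc by simp
    have "sc ((2 * c) ^ m) ((F ^^ m) (PH g w) - t) = sc ((2 * c) ^ m * inverse ((2 * c) ^ m)) (PH (G m) ((Om ^^ m) w))"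
      unfolding t_def by (simp only: diff_diff_eq2 add_diff_cancel_left' scale_scale)
    then have "PH (G m) ((Om ^^ m) w) = sc ((2 * c) ^ m) ((F ^^ m) (PH g w) - t)"
      using right_inverse[OF nz] by (simp only: scale_one)
    also have "\<dots> \<in> ?X" by (intro span_scale span_diff f t)
    finally have y2: "PH (G m) ((Om ^^ m) w) \<in> ?X" .
    show "y \<in> ?X" unfolding y by (simp add: span_add y1 y2)
  qed
qed

lemma Y_n:
  assumes p1: "lead_coeff p = 1" and pn: "degree p = n" and kill: "\<And>v. PO p v = 0"
  shows "PH h ((Om ^^ k) w) \<in> Y n"
proof (induct k arbitrary: h rule: less_induct)
  case (less k)
  show ?case
  proof (cases "k < n")
    case True then show ?thesis by (rule Y_single)
  next
    case False
    define x where "x = PH h ((Om ^^ (k - n)) w)"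
    have ox: "(Om ^^ j) x = PH h ((Om ^^ (j + (k - n))) w)" for j
      by (simp add: x_def PH_Omk funpow_add)
    have "0 = PO p x" using kill by simp
    also have "\<dots> = (\<Sum>j<Suc n. sc (coeff p j) ((Om ^^ j) x))"
      by (simp add: poly_op_def pn lessThan_Suc_atMost)
    also have "\<dots> = (\<Sum>j<n. sc (coeff p j) (PH h ((Om ^^ (j + (k - n))) w))) + PH h ((Om ^^ k) w)"
      using False p1 pn by (simp add: ox)
    finally have eq: "PH h ((Om ^^ k) w) = - (\<Sum>j<n. sc (coeff p j) (PH h ((Om ^^ (j + (k - n))) w)))"
      by (simp add: eq_neg_iff_add_eq_0 add.commute)
    have "(\<Sum>j<n. sc (coeff p j) (PH h ((Om ^^ (j + (k - n))) w))) \<in> Y n"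
      by (intro subspace_sum[OF Y_subspace] subspace_scale[OF Y_subspace] less) (use False in auto)
    then show ?thesis unfolding eq by (rule subspace_neg[OF Y_subspace])
  qed
qed

lemma D0:
  assumes deg: "\<forall>k<K. degree (G k) = 0" and s: "(\<Sum>k<K. PH (G k) ((Om ^^ k) w)) = 0"
    and k0: "k0 < K" "G k0 \<noteq> 0"
  shows "\<exists>q. q \<noteq> 0 \<and> degree q < K \<and> PO q w = 0"
proof -
  define q where "q = (\<Sum>k<K. monom (coeff (G k) 0) k)"
  have cq: "coeff q j = (if j < K then coeff (G j) 0 else 0)" for j
    by (simp add: q_def coeff_sum)
  have Gc: "G k = [:coeff (G k) 0:]" if "k < K" for k
    using degree_0_id[of "G k"] deg that by simp
  have "coeff (G k0) 0 \<noteq> 0" using Gc[OF k0(1)] k0(2) by (metis pCons_0_0)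
  then have "q \<noteq> 0" using cq[of k0] k0(1) by auto
  moreover have "degree q \<le> K - 1" by (rule degree_le) (auto simp: cq)
  moreover have "PO q w = (\<Sum>k<K. PH (G k) ((Om ^^ k) w))"
  proof -
    have "PO q w = (\<Sum>k<K. sc (coeff (G k) 0) ((Om ^^ k) w))"
      by (simp add: q_def poly_op_sum poly_op_monom)
    also have "\<dots> = (\<Sum>k<K. PH (G k) ((Om ^^ k) w))"
    proof (rule sum.cong)
      fix k assume "k \<in> {..<K}"
      then have "PH (G k) ((Om ^^ k) w) = PH [:coeff (G k) 0:] ((Om ^^ k) w)" using Gc by simp
      then show "sc (coeff (G k) 0) ((Om ^^ k) w) = PH (G k) ((Om ^^ k) w)" by simp
    qed simp
    finally show ?thesis .
  qed
  ultimately show ?thesis using s k0(1) by (intro exI[of _ q]) auto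
qed

lemma lemmaD:
  assumes "\<forall>k<K. degree (G k) \<le> d" and "(\<Sum>k<K. PH (G k) ((Om ^^ k) w)) = 0"
    and "k0 < K" "G k0 \<noteq> 0"
  shows "\<exists>q. q \<noteq> 0 \<and> degree q < K \<and> PO q w = 0"
  using assms
proof (induct d arbitrary: G k0)
  case 0
  then show ?case by (intro D0[of K G k0]) auto
next
  case (Suc d)
  show ?case
  proof (cases "\<forall>k<K. degree (G k) = 0")
    case True
    then show ?thesis using Suc.prems by (intro D0[of K G k0]) auto
  next
    case False
    then obtain k1 where k1: "k1 < K" "0 < degree (G k1)" by auto
    define G' where "G' k = pcompose (G k) [:-1, 1:] - G k" for k
    have d': "\<forall>k<K. degree (G' k) \<le> d" using Suc.prems(1) by (simp add: G'_def shift_poly_degree)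
    have nz: "G' k1 \<noteq> 0" using shift_poly_nonconst[OF k1(2)] by (simp add: G'_def)
    have trm: "PH (G' k) ((Om ^^ k) w) = sc (inverse c) (E (PH (G k) ((Om ^^ k) w))) - PH (G k) ((Om ^^ k) w)" for k
      using hc by (simp add: G'_def poly_op_diff E_PH E_Omk lin_scale[OF lin_PH])
    have "(\<Sum>k<K. PH (G' k) ((Om ^^ k) w)) = sc (inverse c) (E (\<Sum>k<K. PH (G k) ((Om ^^ k) w))) - (\<Sum>k<K. PH (G k) ((Om ^^ k) w))"
      by (simp add: trm lin_sum[OF linE] scale_sum_right sum_subtractf)
    also have "\<dots> = 0" using Suc.prems(2) by (simp add: lin_zero[OF linE])
    finally have s': "(\<Sum>k<K. PH (G' k) ((Om ^^ k) w)) = 0" .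
    show ?thesis by (rule Suc.hyps[OF d' s' k1(1) nz])
  qed
qed

end

context WM
begin

lemma indep_core:
  "(\<And>q. q \<noteq> 0 \<Longrightarrow> PO q w = 0 \<Longrightarrow> M \<le> degree q) \<Longrightarrow>
   (\<Sum>i<M. (F ^^ i) (PH (g i) w)) = 0 \<Longrightarrow> \<forall>i<M. g i = 0"
proof (induct M arbitrary: g)
  case 0
  then show ?case by simp
next
  case (Suc M)
  have LF: "lin sc (F ^^ M)" by (rule lin_funpow[OF linF])
  have s: "(\<Sum>i<M. (F ^^ i) (PH (g i) w)) + (F ^^ M) (PH (g M) w) = 0"
    using Suc.prems(2) by simp
  show ?case
  proof (cases "g M = 0")
    case True
    then have s0: "(\<Sum>i<M. (F ^^ i) (PH (g i) w)) = 0" using s by (simp add: lin_zero[OF LF])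
    have h0: "M \<le> degree q" if "q \<noteq> 0" "PO q w = 0" for q
      using Suc.prems(1)[OF that] by simp
    have "\<forall>i<M. g i = 0" by (rule Suc.hyps[OF h0 s0])
    then show ?thesis using True less_Suc_eq by auto
  next
    case False
    define a where "a = inverse ((2 * c) ^ M)"
    define g' where "g' = pcompose (g M) [:of_nat M, 1:]"
    define t where "t = (F ^^ M) (PH (g M) w) - sc a (PH g' ((Om ^^ M) w))"
    have t: "t \<in> Y M" using lemmaC[of M "g M"] by (simp add: t_def a_def g'_def)
    have sM: "(\<Sum>i<M. (F ^^ i) (PH (g i) w)) \<in> Y M"
    proof (rule subspace_sum[OF Y_subspace])
      fix i assume "i \<in> {..<M}"
      then have "Suc i \<le> M" by simp
      then show "(F ^^ i) (PH (g i) w) \<in> Y M" using Fi_in_Y[of i "g i"] Y_mono[of "Suc i" M] by blast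
    qed
    have "(\<Sum>i<M. (F ^^ i) (PH (g i) w)) + t \<in> Y M" by (rule subspace_add[OF Y_subspace sM t])
    then obtain G where G: "(\<Sum>i<M. (F ^^ i) (PH (g i) w)) + t = (\<Sum>k<M. PH (G k) ((Om ^^ k) w))"
      unfolding Y_def by blast
    define G' where "G' = G(M := smult a g')"
    have "(\<Sum>k<Suc M. PH (G' k) ((Om ^^ k) w)) = (\<Sum>k<M. PH (G k) ((Om ^^ k) w)) + PH (smult a g') ((Om ^^ M) w)"
      by (simp add: G'_def)
    also have "\<dots> = (\<Sum>i<M. (F ^^ i) (PH (g i) w)) + (F ^^ M) (PH (g M) w)"
      unfolding G[symmetric] by (simp add: t_def poly_op_smult)
    also have "\<dots> = 0" by (rule s)
    finally have s': "(\<Sum>k<Suc M. PH (G' k) ((Om ^^ k) w)) = 0" .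
    have "a \<noteq> 0" using hc by (simp add: a_def)
    moreover have "g' \<noteq> 0"
    proof
      assume "g' = 0"
      then have "g M = 0" by (intro pcompose_eq_0[of "g M" "[:of_nat M, 1:]"]) (simp_all add: g'_def)
      with False show False by simp
    qed
    ultimately have nz: "G' M \<noteq> 0" by (simp add: G'_def)
    have "\<forall>k<Suc M. degree (G' k) \<le> (\<Sum>j<Suc M. degree (G' j))"
      by (intro allI impI member_le_sum) auto
    from lemmaD[OF this s' _ nz] obtain q where q: "q \<noteq> 0" "degree q < Suc M" "PO q w = 0" by auto
    from Suc.prems(1)[OF q(1) q(3)] q(2) show ?thesis by simp
  qed
qed

lemma reduce:
  assumes J: "finite J" "J \<subseteq> {..<M} \<times> UNIV"
    and hyp: "\<And>q. q \<noteq> 0 \<Longrightarrow> PO q w = 0 \<Longrightarrow> M \<le> degree q"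
    and s: "(\<Sum>x\<in>J. sc (a x) (fam x)) = 0"
  shows "\<forall>x\<in>J. a x = 0"
proof -
  obtain N where N: "snd ` J \<subseteq> {..<N}" using finite_nat_bounded[of "snd ` J"] J(1) by auto
  have JMN: "J \<subseteq> {..<M} \<times> {..<N}" using J(2) N by force
  define A where "A i j = (if (i, j) \<in> J then a (i, j) else 0)" for i j
  define g where "g i = (\<Sum>j<N. monom (A i j) j)" for i
  have "(\<Sum>x\<in>J. sc (a x) (fam x)) = (\<Sum>x\<in>{..<M} \<times> {..<N}. sc (A (fst x) (snd x)) (fam x))"
    by (rule sum.mono_neutral_cong_left) (use JMN in \<open>auto simp: A_def\<close>)
  also have "\<dots> = (\<Sum>i<M. \<Sum>j<N. sc (A i j) (fam (i, j)))"
    by (simp add: sum.cartesian_product split_beta)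
  also have "\<dots> = (\<Sum>i<M. (F ^^ i) (PH (g i) w))"
  proof (rule sum.cong)
    fix i
    have LF: "lin sc (F ^^ i)" by (rule lin_funpow[OF linF])
    show "(\<Sum>j<N. sc (A i j) (fam (i, j))) = (F ^^ i) (PH (g i) w)"
      by (simp add: g_def poly_op_sum poly_op_monom lin_sum[OF LF] lin_scale[OF LF] fam_def)
  qed simp
  finally have "(\<Sum>i<M. (F ^^ i) (PH (g i) w)) = 0" using s by simp
  from indep_core[OF hyp this] have gz: "\<forall>i<M. g i = 0" by blast
  show ?thesis
  proof
    fix x assume x: "x \<in> J"
    obtain i j where ij: "x = (i, j)" by force
    have "i < M" "j < N" using x JMN ij by auto
    then have "coeff (g i) j = A i j" by (simp add: g_def coeff_sum)
    then have "A i j = 0" using gz \<open>i < M\<close> by simp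
    then show "a x = 0" using x ij by (simp add: A_def)
  qed
qed

lemma ZV_iff: "q \<in> Z_V sc u E F H \<longleftrightarrow> PO q w = 0"
  using PO_kill by (auto simp: Z_V_def)

lemma case1:
  assumes p: "p \<noteq> 0" "lead_coeff p = 1" "degree p = n" and Z: "Z_V sc u E F H = {p * r | r. True}"
  shows "is_basis_family sc fam ({..<n} \<times> UNIV)"
proof -
  have "p * 1 \<in> Z_V sc u E F H" unfolding Z by blast
  then have kill: "PO p v = 0" for v using PO_kill by (simp add: ZV_iff)
  have sp: "span (fam ` ({..<n} \<times> UNIV)) = UNIV"
  proof -
    have "v \<in> span (fam ` ({..<n} \<times> UNIV))" for v
    proof -
      obtain m where "v \<in> Y m" using Y_all by blast
      then obtain G where v: "v = (\<Sum>k<m. PH (G k) ((Om ^^ k) w))" unfolding Y_def by blast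
      have "v \<in> Y n" unfolding v
        by (intro subspace_sum[OF Y_subspace] Y_n[OF p(2) p(3) kill])
      then show ?thesis using Y_sub_XS by blast
    qed
    then show ?thesis by blast
  qed
  have hyp: "n \<le> degree q" if "q \<noteq> 0" "PO q w = 0" for q
  proof -
    have "q \<in> Z_V sc u E F H" using that by (simp add: ZV_iff)
    then obtain r where r: "q = p * r" unfolding Z by blast
    then have "r \<noteq> 0" using that by auto
    then show ?thesis using r p by (simp add: degree_mult_eq)
  qed
  have "inj_on fam ({..<n} \<times> UNIV) \<and> \<not> dependent (fam ` ({..<n} \<times> UNIV))"
    by (rule indep_family) (rule reduce, auto intro: hyp)
  then show ?thesis using sp by (simp add: is_basis_family_def)
qed

lemma case2:
  assumes Z: "Z_V sc u E F H = {0}"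
  shows "is_basis_family sc fam UNIV"
proof -
  have sp: "span (fam ` UNIV) = UNIV"
  proof -
    have "v \<in> span (fam ` UNIV)" for v
    proof -
      obtain m where "v \<in> Y m" using Y_all by blast
      then have "v \<in> span (fam ` ({..<m} \<times> UNIV))" using Y_sub_XS by blast
      moreover have "span (fam ` ({..<m} \<times> UNIV)) \<subseteq> span (fam ` UNIV)" by (rule span_mono) auto
      ultimately show ?thesis by blast
    qed
    then show ?thesis by blast
  qed
  have hyp: "False" if "q \<noteq> 0" "PO q w = 0" for q
  proof -
    have "q \<in> Z_V sc u E F H" using that by (simp add: ZV_iff)
    then show False using Z that by simp
  qed
  have "inj_on fam UNIV \<and> \<not> dependent (fam ` UNIV)"
  proof (rule indep_family)
    fix J and a :: "nat \<times> nat \<Rightarrow> complex"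
    assume J: "finite J" "J \<subseteq> UNIV" and s: "(\<Sum>x\<in>J. sc (a x) (fam x)) = 0"
    obtain M where M: "fst ` J \<subseteq> {..<M}" using finite_nat_bounded[of "fst ` J"] J(1) by auto
    have "J \<subseteq> {..<M} \<times> UNIV" using M by force
    from reduce[OF J(1) this _ s] hyp show "\<forall>x\<in>J. a x = 0" by blast
  qed
  then show ?thesis using sp by (simp add: is_basis_family_def)
qed

end

theorem mainTheorem14:
  fixes sc :: "complex \<Rightarrow> 'v::ab_group_add \<Rightarrow> 'v"
    and f u :: "complex poly"
    and E F H :: "'v \<Rightarrow> 'v"
    and c :: complex and w :: 'v
  assumes hu: "f = smult (1/2) (pcompose u [:1, 1:] - u)"
    and hc: "c \<noteq> 0"
    and hV: "whittaker_module sc f E F H c w"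
  shows "(\<forall>p n. p \<noteq> 0 \<and> lead_coeff p = 1 \<and> degree p = n \<and> Z_V sc u E F H = {p * r | r. True} \<longrightarrow>
            is_basis_family sc (\<lambda>(i, j). (F ^^ i) ((H ^^ j) w)) ({..<n} \<times> UNIV))
       \<and> (Z_V sc u E F H = {0} \<longrightarrow>
            is_basis_family sc (\<lambda>(i, j). (F ^^ i) ((H ^^ j) w)) (UNIV :: (nat \<times> nat) set))"
proof -
  have R: "R_module sc f E F H" "E w = sc c w" "gen_submodule sc E F H w = UNIV"
    using hV by (auto simp: whittaker_module_def)
  have l: "\<And>T. Vector_Spaces.linear sc sc T \<Longrightarrow> lin sc T" by (simp add: Vector_Spaces.linear_iff lin_def)
  have W: "WM sc f u E F H c w"
    using R hu hc l unfolding R_module_def WM_def WM_axioms_def cvs_def by auto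
  interpret W: WM sc f u E F H c w by (rule W)
  have fam: "W.fam = (\<lambda>(i, j). (F ^^ i) ((H ^^ j) w))" by (simp add: W.fam_def)
  show ?thesis using W.case1 W.case2 unfolding fam by blast
qed

end
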